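(* Every floor-randomized, left-continuous mechanism satisfying strict DD is undominated.
   Context: Setting. Let $\Theta=[\underline\theta,\overline\theta]$ with $0<\underline\theta<\overline\theta$. Let $c>0$ and let $P:\mathbb R_+\to\mathbb R_+$ be continuous and strictly decreasing with $P(\overline q)=0$ for some $\overline q>0$. Put $V(q)=\int_0^q P(z)\,dz$ and $\mathrm{TS}(\theta,q)=V(q)-c-\theta q$ for $q>0$, $\mathrm{TS}(\theta,0)=0$. Assume (A2): $\mathrm{TS}(\overline\theta,P^{-1}(\overline\theta))>0$. A mechanism is a triple $M=(r,q,u)$ of functions $r:\Theta\to[0,1]$, $q:\Theta\to[0,\overline q]$, $u:\Theta\to\mathbb R$ with $q(\theta)=0$ if and only if $r(\theta)=0$. It is IC if $u(\theta)\ge u(\theta')+(\theta'-\theta)q(\theta')r(\theta')$ for all $\theta,\theta'\in\Theta$, and IR if $u(\theta)\ge 0$ for all $\theta$. (Known fact: $M$ is IC iff $\theta\mapsto q(\theta)r(\theta)$ is nonincreasing and $u(\theta)=u(\overline\theta)+\int_\theta^{\overline\theta}q(z)r(z)\,dz$ for all $\theta$; an IC mechanism is IR iff $u(\overline\theta)\ge0$.) Fix $\alpha\in[0,1)$. The regulator's surplus at $\theta$ is $\mathrm{RS}_\alpha(\theta,M)=r(\theta)\,\mathrm{TS}(\theta,q(\theta))-(1-\alpha)u(\theta)$. An IC and IR mechanism $\tilde M$ dominates an IC and IR mechanism $M$ if $\mathrm{RS}_\alpha(\theta,\tilde M)\ge \mathrm{RS}_\alpha(\theta,M)$ for all $\theta\in\Theta$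 with strict inequality for some $\theta$; $M$ is undominated if it is IC, IR and not dominated by any IC and IR mechanism. The quantity floor $\hat q$ is the unique $q>0$ with $V(q)-qP(q)=c$. A mechanism $(r,q,u)$ is floor-randomized if it is IC, IR, $u(\overline\theta)=0$, and $\Theta$ can be partitioned into three pairwise disjoint (possibly empty) intervals $\Theta_1,\Theta_{01},\Theta_0$, with every element of $\Theta_0$ larger than every element of $\Theta_{01}$ and every element of $\Theta_{01}$ larger than every element of $\Theta_1$, such that: $q(\theta)\ge\hat q$ and $r(\theta)=1$ for $\theta\in\Theta_1$; $q(\theta)=\hat q$ and $r(\theta)\in(0,1)$ for $\theta\in\Theta_{01}$; $q(\theta)=r(\theta)=0$ for $\theta\in\Theta_0$. The efficient quantity is $q_e(\theta)=P^{-1}(\theta)$. A mechanism satisfies downward distortion (DD) if $q(\theta)\le q_e(\theta)$ for all $\theta$, with equality at $\theta=\underline\theta$; it satisfies strict DD if moreover $q(\theta)<q_e(\theta)$ for every $\theta>\underline\theta$. A mechanism is left continuous if $\theta\mapsto q(\theta)r(\theta)$ is left continuous at every $\theta\in(\underline\theta,\overline\theta]$. *)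

theory Defs
  imports "HOL-Analysis.Analysis"
begin

(* Type space Theta = [tlo, thi]. A mechanism is a triple (r, q, u) of real functions;
   only their values on Theta matter. *)

definition V :: "(real \<Rightarrow> real) \<Rightarrow> real \<Rightarrow> real" where
  "V P q = integral {0..q} P"

definition TS :: "(real \<Rightarrow> real) \<Rightarrow> real \<Rightarrow> real \<Rightarrow> real \<Rightarrow> real" where
  "TS P c \<theta> q = (if q = 0 then 0 else V P q - c - \<theta> * q)"

definition is_mechanism ::
  "real \<Rightarrow> real \<Rightarrow> real \<Rightarrow> (real \<Rightarrow> real) \<Rightarrow> (real \<Rightarrow> real) \<Rightarrow> (real \<Rightarrow> real) \<Rightarrow> bool" where
  "is_mechanism tlo thi qbar r q u \<longleftrightarrow>
     (\<forall>\<theta>\<in>{tlo..thi}. 0 \<le> r \<theta> \<and> r \<theta> \<le> 1 \<and> 0 \<le> q \<theta> \<and> q \<theta> \<le> qbar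
                   \<and> (q \<theta> = 0 \<longleftrightarrow> r \<theta> = 0))"

definition IC ::
  "real \<Rightarrow> real \<Rightarrow> (real \<Rightarrow> real) \<Rightarrow> (real \<Rightarrow> real) \<Rightarrow> (real \<Rightarrow> real) \<Rightarrow> bool" where
  "IC tlo thi r q u \<longleftrightarrow>
     (\<forall>\<theta>\<in>{tlo..thi}. \<forall>\<theta>'\<in>{tlo..thi}. u \<theta> \<ge> u \<theta>' + (\<theta>' - \<theta>) * q \<theta>' * r \<theta>')"

definition IR :: "real \<Rightarrow> real \<Rightarrow> (real \<Rightarrow> real) \<Rightarrow> bool" where
  "IR tlo thi u \<longleftrightarrow> (\<forall>\<theta>\<in>{tlo..thi}. u \<theta> \<ge> 0)"

definition RS ::
  "(real \<Rightarrow> real) \<Rightarrow> real \<Rightarrow> real \<Rightarrow> real \<Rightarrow> (real \<Rightarrow> real) \<Rightarrow> (real \<Rightarrow> real) \<Rightarrow> (real \<Rightarrow> real) \<Rightarrow> real" where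
  "RS P c \<alpha> \<theta> r q u = r \<theta> * TS P c \<theta> (q \<theta>) - (1 - \<alpha>) * u \<theta>"

definition admissible ::
  "real \<Rightarrow> real \<Rightarrow> real \<Rightarrow> (real \<Rightarrow> real) \<Rightarrow> (real \<Rightarrow> real) \<Rightarrow> (real \<Rightarrow> real) \<Rightarrow> bool" where
  "admissible tlo thi qbar r q u \<longleftrightarrow> is_mechanism tlo thi qbar r q u \<and> IC tlo thi r q u \<and> IR tlo thi u"

definition dominates ::
  "(real \<Rightarrow> real) \<Rightarrow> real \<Rightarrow> real \<Rightarrow> real \<Rightarrow> real \<Rightarrow> real \<Rightarrow>
   (real \<Rightarrow> real) \<Rightarrow> (real \<Rightarrow> real) \<Rightarrow> (real \<Rightarrow> real) \<Rightarrow>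
   (real \<Rightarrow> real) \<Rightarrow> (real \<Rightarrow> real) \<Rightarrow> (real \<Rightarrow> real) \<Rightarrow> bool" where
  "dominates P c qbar \<alpha> tlo thi r' q' u' r q u \<longleftrightarrow>
     admissible tlo thi qbar r' q' u' \<and> admissible tlo thi qbar r q u \<and>
     (\<forall>\<theta>\<in>{tlo..thi}. RS P c \<alpha> \<theta> r' q' u' \<ge> RS P c \<alpha> \<theta> r q u) \<and>
     (\<exists>\<theta>\<in>{tlo..thi}. RS P c \<alpha> \<theta> r' q' u' > RS P c \<alpha> \<theta> r q u)"

definition undominated ::
  "(real \<Rightarrow> real) \<Rightarrow> real \<Rightarrow> real \<Rightarrow> real \<Rightarrow> real \<Rightarrow> real \<Rightarrow>
   (real \<Rightarrow> real) \<Rightarrow> (real \<Rightarrow> real) \<Rightarrow> (real \<Rightarrow> real) \<Rightarrow> bool" where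
  "undominated P c qbar \<alpha> tlo thi r q u \<longleftrightarrow>
     admissible tlo thi qbar r q u \<and>
     \<not> (\<exists>r' q' u'. dominates P c qbar \<alpha> tlo thi r' q' u' r q u)"

definition qfloor :: "(real \<Rightarrow> real) \<Rightarrow> real \<Rightarrow> real \<Rightarrow> real" where
  "qfloor P c qbar = (THE q. q \<in> {0<..qbar} \<and> V P q - q * P q = c)"

definition qeff :: "(real \<Rightarrow> real) \<Rightarrow> real \<Rightarrow> real \<Rightarrow> real" where
  "qeff P qbar \<theta> = (THE q. q \<in> {0..qbar} \<and> P q = \<theta>)"

definition floor_randomized ::
  "(real \<Rightarrow> real) \<Rightarrow> real \<Rightarrow> real \<Rightarrow> real \<Rightarrow> real \<Rightarrow>
   (real \<Rightarrow> real) \<Rightarrow> (real \<Rightarrow> real) \<Rightarrow> (real \<Rightarrow> real) \<Rightarrow> bool" where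
  "floor_randomized P c qbar tlo thi r q u \<longleftrightarrow>
     admissible tlo thi qbar r q u \<and> u thi = 0 \<and>
     (\<exists>T1 T01 T0 :: real set.
        is_interval T1 \<and> is_interval T01 \<and> is_interval T0 \<and>
        T1 \<inter> T01 = {} \<and> T1 \<inter> T0 = {} \<and> T01 \<inter> T0 = {} \<and>
        T1 \<union> T01 \<union> T0 = {tlo..thi} \<and>
        (\<forall>x\<in>T0. \<forall>y\<in>T01. y < x) \<and> (\<forall>x\<in>T01. \<forall>y\<in>T1. y < x) \<and>
        (\<forall>\<theta>\<in>T1. q \<theta> \<ge> qfloor P c qbar \<and> r \<theta> = 1) \<and>
        (\<forall>\<theta>\<in>T01. q \<theta> = qfloor P c qbar \<and> 0 < r \<theta> \<and> r \<theta> < 1) \<and>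
        (\<forall>\<theta>\<in>T0. q \<theta> = 0 \<and> r \<theta> = 0))"

definition strict_DD ::
  "(real \<Rightarrow> real) \<Rightarrow> real \<Rightarrow> real \<Rightarrow> real \<Rightarrow> (real \<Rightarrow> real) \<Rightarrow> bool" where
  "strict_DD P qbar tlo thi q \<longleftrightarrow>
     (\<forall>\<theta>\<in>{tlo..thi}. q \<theta> \<le> qeff P qbar \<theta>) \<and> q tlo = qeff P qbar tlo \<and>
     (\<forall>\<theta>\<in>{tlo<..thi}. q \<theta> < qeff P qbar \<theta>)"

definition left_continuous ::
  "real \<Rightarrow> real \<Rightarrow> (real \<Rightarrow> real) \<Rightarrow> (real \<Rightarrow> real) \<Rightarrow> bool" where
  "left_continuous tlo thi r q \<longleftrightarrow>
     (\<forall>\<theta>\<in>{tlo<..thi}. continuous (at_left \<theta>) (\<lambda>t. q t * r t))"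

end

theory Submission
  imports Defs
begin


context
  fixes P :: "real \<Rightarrow> real" and qbar :: real
  assumes Pcont: "continuous_on {0..qbar} P"
    and Pdec: "\<And>x y. 0 \<le> x \<Longrightarrow> x < y \<Longrightarrow> y \<le> qbar \<Longrightarrow> P y < P x"
begin

lemma Pmono: "0 \<le> x \<Longrightarrow> x \<le> y \<Longrightarrow> y \<le> qbar \<Longrightarrow> P y \<le> P x"
  using Pdec[of x y] by (cases "x = y") auto

lemma Pint: "0 \<le> x \<Longrightarrow> y \<le> qbar \<Longrightarrow> P integrable_on {x..y}"
  by (rule integrable_continuous_real, rule continuous_on_subset[OF Pcont]) auto

lemma V_diff: "0 \<le> x \<Longrightarrow> x \<le> y \<Longrightarrow> y \<le> qbar \<Longrightarrow> V P y - V P x = integral {x..y} P"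
  using Henstock_Kurzweil_Integration.integral_combine[of 0 x y P] Pint[of 0 y]
  unfolding V_def by simp

lemma V_bounds:
  assumes "0 \<le> x" "x \<le> y" "y \<le> qbar"
  shows "(y-x)*P y \<le> V P y - V P x \<and> V P y - V P x \<le> (y-x)*P x"
proof -
  have i: "P integrable_on {x..y}" using Pint assms by auto
  have "integral {x..y} (\<lambda>t. P y) \<le> integral {x..y} P"
    by (rule integral_le[OF integrable_const_ivl i]) (use Pmono assms in auto)
  moreover have "integral {x..y} P \<le> integral {x..y} (\<lambda>t. P x)"
    by (rule integral_le[OF i integrable_const_ivl]) (use Pmono assms in auto)
  ultimately show ?thesis using V_diff[OF assms] assms by (simp add: mult.commute)
qed

lemma V_concave:
  assumes "0 \<le> a" "a \<le> qbar" "0 \<le> b" "b \<le> qbar"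
  shows "V P a - V P b \<le> P b * (a - b)"
proof (cases "b \<le> a")
  case True thus ?thesis using V_bounds[of b a] assms by (simp add: mult.commute)
next
  case False thus ?thesis using V_bounds[of a b] assms by (simp add: algebra_simps)
qed

lemma f_mono:
  assumes "0 \<le> x" "x \<le> y" "y \<le> qbar"
  shows "x*(P x - P y) \<le> (V P y - y*P y) - (V P x - x*P x)"
  using V_bounds[OF assms] by (simp add: algebra_simps)

lemma V_cont: "continuous_on {0..qbar} (V P)"
  unfolding V_def by (rule indefinite_integral_continuous_1, rule Pint) auto

lemma V0: "V P 0 = 0" unfolding V_def by simp

lemma qfloor_props:
  assumes c: "c > 0" and qe: "qe \<in> {0..qbar}" "P qe = thi" "TS P c thi qe > 0"
  shows "0 < qfloor P c qbar \<and> qfloor P c qbar \<le> qbar \<and>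
         V P (qfloor P c qbar) - qfloor P c qbar * P (qfloor P c qbar) = c"
proof -
  have qe0: "qe \<noteq> 0" using qe unfolding TS_def by auto
  have "thi*qe < V P qe - c" using qe qe0 unfolding TS_def by simp
  hence fqe: "V P qe - qe * P qe > c" using qe by (simp add: mult.commute)
  have contf: "continuous_on {0..qe} (\<lambda>x. V P x - x * P x)"
    using qe by (intro continuous_intros continuous_on_subset[OF V_cont] continuous_on_subset[OF Pcont]) auto
  obtain x where x: "0 \<le> x" "x \<le> qe" "V P x - x * P x = c"
    using IVT'[of "\<lambda>x. V P x - x * P x" 0 c qe, OF _ _ _ contf] V0 c fqe qe by auto
  have x0: "x \<noteq> 0" using x V0 c by auto
  have uniq: "y = x" if "y \<in> {0<..qbar}" "V P y - y * P y = c" for y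
  proof (rule ccontr)
    assume "y \<noteq> x"
    then consider "y < x" | "x < y" by linarith
    thus False
    proof cases
      case 1
      have "y*(P y - P x) \<le> 0" using f_mono[of y x] that 1 x qe by auto
      moreover have "P y - P x > 0" using Pdec[of y x] that 1 x qe by auto
      ultimately show False using that by (simp add: mult_le_0_iff)
    next
      case 2
      have "x*(P x - P y) \<le> 0" using f_mono[of x y] that 2 x qe by auto
      moreover have "P x - P y > 0" using Pdec[of x y] that 2 x qe by auto
      ultimately show False using x x0 by (simp add: mult_le_0_iff)
    qed
  qed
  have "qfloor P c qbar = x" unfolding qfloor_def
  proof (rule the_equality)
    show "x \<in> {0<..qbar} \<and> V P x - x * P x = c" using x x0 qe by auto
  next
    fix y assume "y \<in> {0<..qbar} \<and> V P y - y * P y = c"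
    thus "y = x" using uniq by blast
  qed
  thus ?thesis using x x0 qe by auto
qed

lemma qeff_props:
  assumes "0 \<le> \<theta>" "\<theta> \<le> P 0" "P qbar = 0" "0 \<le> qbar"
  shows "qeff P qbar \<theta> \<in> {0..qbar} \<and> P (qeff P qbar \<theta>) = \<theta>"
proof -
  obtain x where x: "0 \<le> x" "x \<le> qbar" "P x = \<theta>"
    using IVT2'[of P qbar \<theta> 0, OF _ _ _ Pcont] assms by auto
  have uniq: "y = x" if "y \<in> {0..qbar}" "P y = \<theta>" for y
  proof (rule ccontr)
    assume "y \<noteq> x"
    hence "y < x \<or> x < y" by linarith
    thus False using Pdec[of x y] Pdec[of y x] that x by force
  qed
  have "qeff P qbar \<theta> = x" unfolding qeff_def
  proof (rule the_equality)
    show "x \<in> {0..qbar} \<and> P x = \<theta>" using x by auto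
  next
    fix y assume "y \<in> {0..qbar} \<and> P y = \<theta>"
    thus "y = x" using uniq by blast
  qed
  thus ?thesis using x by auto
qed

end


lemma tele:
  fixes f g :: "real \<Rightarrow> real"
  assumes xy: "x \<le> y" and C: "C \<ge> 0"
    and step: "\<And>t t'. x \<le> t \<Longrightarrow> t < t' \<Longrightarrow> t' \<le> y \<Longrightarrow> f t' \<le> f t + C*(t'-t)*(g t - g t')"
  shows "f y \<le> f x"
proof (rule ccontr)
  assume neg: "\<not> f y \<le> f x"
  have bound: "f y \<le> f x + C*((y-x)/real n)*(g x - g y)" if n: "n > 0" for n :: nat
  proof -
    define h where "h = (y-x)/real n"
    have h0: "h \<ge> 0" using xy n unfolding h_def by auto
    have "\<forall>m. m \<le> n \<longrightarrow> f (x + real m * h) \<le> f x + C*h*(g x - g (x + real m * h))"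
    proof
      fix m show "m \<le> n \<longrightarrow> f (x + real m * h) \<le> f x + C*h*(g x - g (x + real m * h))"
      proof (induction m)
        case 0 thus ?case by simp
      next
        case (Suc m)
        show ?case
        proof
          assume m: "Suc m \<le> n"
          have IH: "f (x + real m * h) \<le> f x + C*h*(g x - g (x + real m * h))" using Suc m by simp
          have le: "x + real (Suc m) * h \<le> y"
          proof -
            have "real (Suc m) * h \<le> real n * h" using m h0 by (intro mult_right_mono) auto
            also have "real n * h = y - x" using n unfolding h_def by simp
            finally show ?thesis by simp
          qed
          show "f (x + real (Suc m) * h) \<le> f x + C*h*(g x - g (x + real (Suc m) * h))"
          proof (cases "h = 0")
            case True thus ?thesis by simp
          next
            case False
            hence hp: "h > 0" using h0 by simp
            have st: "f (x + real (Suc m) * h) \<le> f (x + real m * h) + C*((x + real (Suc m) * h) - (x + real m * h))*(g (x + real m * h) - g (x + real (Suc m) * h))"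
              by (rule step) (use hp le in \<open>auto simp: algebra_simps\<close>)
            have "(x + real (Suc m) * h) - (x + real m * h) = h" by (simp add: algebra_simps)
            with st IH show ?thesis by (simp add: algebra_simps)
          qed
        qed
      qed
    qed
    hence "f (x + real n * h) \<le> f x + C*h*(g x - g (x + real n * h))" by blast
    moreover have "x + real n * h = y" using n unfolding h_def by simp
    ultimately show ?thesis unfolding h_def by simp
  qed
  define K where "K = C*(y-x)*(g x - g y)"
  define e where "e = f y - f x"
  have e0: "e > 0" using neg unfolding e_def by simp
  obtain n :: nat where n: "K / e < real n" using reals_Archimedean2 by blast
  have npos: "n > 0" 
  proof (rule ccontr)
    assume "\<not> n > 0" hence "n = 0" by simp
    with n have "K < 0" using e0 by (simp add: divide_less_0_iff)
    moreover have "f y \<le> f x + K / real 1" using bound[of 1] unfolding K_def by simp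
    ultimately show False using e0 unfolding e_def by simp
  qed
  have "K < real n * e" using n e0 by (simp add: divide_less_eq mult.commute)
  hence "K / real n < e" using npos by (simp add: divide_less_eq mult.commute)
  moreover have "f y \<le> f x + K / real n" using bound[OF npos] unfolding K_def by (simp add: field_simps)
  ultimately show False unfolding e_def by simp
qed



lemma divstep:
  fixes X Y d e E :: real
  assumes "X \<ge> Y * d / e - E" "d > 0" "e > 0"
  shows "X / d \<ge> Y / e - E / d"
proof -
  have "X / d \<ge> (Y * d / e - E) / d" using assms by (intro divide_right_mono) auto
  also have "(Y * d / e - E) / d = Y / e - E / d" using assms by (simp add: field_simps)
  finally show ?thesis .
qed

context
  fixes P :: "real \<Rightarrow> real" and c qbar \<alpha> tlo thi qh :: real
    and r q u r' q' u' :: "real \<Rightarrow> real" and T1 T01 T0 :: "real set"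
  assumes th: "tlo < thi" and al: "0 \<le> \<alpha>" "\<alpha> < 1"
    and Pcont: "continuous_on {0..qbar} P"
    and Pdec: "\<And>x y. 0 \<le> x \<Longrightarrow> x < y \<Longrightarrow> y \<le> qbar \<Longrightarrow> P y < P x"
    and qh: "0 < qh" "qh \<le> qbar" "V P qh - qh * P qh = c"
    and mech: "is_mechanism tlo thi qbar r q u" and mech': "is_mechanism tlo thi qbar r' q' u'"
    and IC: "IC tlo thi r q u" and IC': "IC tlo thi r' q' u'"
    and uthi: "u thi = 0" and IR': "IR tlo thi u'"
    and part: "T1 \<union> T01 \<union> T0 = {tlo..thi}"
    and T1: "\<And>t. t \<in> T1 \<Longrightarrow> q t \<ge> qh \<and> r t = 1"
    and T01: "\<And>t. t \<in> T01 \<Longrightarrow> q t = qh \<and> 0 < r t \<and> r t < 1"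
    and T0: "\<And>t. t \<in> T0 \<Longrightarrow> q t = 0 \<and> r t = 0"
    and SDD1: "\<And>t. t \<in> {tlo<..thi} \<Longrightarrow> P (q t) > t"
    and SDD2: "P (q tlo) = tlo" and qtlo: "q tlo \<noteq> 0"
    and LC: "\<And>t. t \<in> {tlo<..thi} \<Longrightarrow> continuous (at_left t) (\<lambda>t. q t * r t)"
    and dom: "\<And>t. t \<in> {tlo..thi} \<Longrightarrow> RS P c \<alpha> t r' q' u' \<ge> RS P c \<alpha> t r q u"
begin

abbreviation "Q t \<equiv> q t * r t"
abbreviation "Q' t \<equiv> q' t * r' t"
abbreviation "J t \<equiv> u' t - u t"
abbreviation "A \<equiv> T1 \<union> T01"

lemma ICu: "t \<in> {tlo..thi} \<Longrightarrow> t' \<in> {tlo..thi} \<Longrightarrow> u t \<ge> u t' + (t'-t) * Q t'"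
  using IC unfolding IC_def by (auto simp: mult.assoc)

lemma ICu': "t \<in> {tlo..thi} \<Longrightarrow> t' \<in> {tlo..thi} \<Longrightarrow> u' t \<ge> u' t' + (t'-t) * Q' t'"
  using IC' unfolding IC_def by (auto simp: mult.assoc)

lemma Qrange: "t \<in> {tlo..thi} \<Longrightarrow> 0 \<le> Q t \<and> Q t \<le> qbar"
proof -
  assume t: "t \<in> {tlo..thi}"
  hence "0 \<le> r t" "r t \<le> 1" "0 \<le> q t" "q t \<le> qbar" using mech unfolding is_mechanism_def by auto
  thus ?thesis using mult_mono[of "q t" qbar "r t" 1] by auto
qed

lemma Qrange': "t \<in> {tlo..thi} \<Longrightarrow> 0 \<le> Q' t \<and> Q' t \<le> qbar"
proof -
  assume t: "t \<in> {tlo..thi}"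
  hence "0 \<le> r' t" "r' t \<le> 1" "0 \<le> q' t" "q' t \<le> qbar" using mech' unfolding is_mechanism_def by auto
  thus ?thesis using mult_mono[of "q' t" qbar "r' t" 1] by auto
qed

lemma Qmono: "t \<in> {tlo..thi} \<Longrightarrow> t' \<in> {tlo..thi} \<Longrightarrow> t \<le> t' \<Longrightarrow> Q t' \<le> Q t"
proof -
  assume a: "t \<in> {tlo..thi}" "t' \<in> {tlo..thi}" "t \<le> t'"
  show ?thesis
  proof (cases "t = t'")
    case False
    hence lt: "t < t'" using a by simp
    have "u t \<ge> u t' + (t'-t) * Q t'" "u t' \<ge> u t + (t-t') * Q t" using ICu a by auto
    hence "(t'-t) * Q t' \<le> (t'-t) * Q t" by (simp add: algebra_simps)
    thus ?thesis using lt by simp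
  qed simp
qed

lemma uLip: "t \<in> {tlo..thi} \<Longrightarrow> t' \<in> {tlo..thi} \<Longrightarrow> \<bar>u t - u t'\<bar> \<le> qbar * \<bar>t - t'\<bar>"
proof -
  assume a: "t \<in> {tlo..thi}" "t' \<in> {tlo..thi}"
  have 1: "u t \<ge> u t' + (t'-t) * Q t'" "u t' \<ge> u t + (t-t') * Q t" using ICu a by auto
  have q: "0 \<le> Q t" "Q t \<le> qbar" "0 \<le> Q t'" "Q t' \<le> qbar" using Qrange a by auto
  show ?thesis
  proof (cases "t \<le> t'")
    case True
    have "(t'-t) * Q t \<le> (t'-t)*qbar" "(t'-t) * Q t' \<ge> 0" using True q by (auto intro: mult_left_mono)
    thus ?thesis using 1 True by (auto simp: abs_if algebra_simps)
  next
    case False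
    have "(t-t') * Q t' \<le> (t-t')*qbar" "(t-t') * Q t \<ge> 0" using False q by (auto intro: mult_left_mono)
    thus ?thesis using 1 False by (auto simp: abs_if algebra_simps)
  qed
qed

lemma uLip': "t \<in> {tlo..thi} \<Longrightarrow> t' \<in> {tlo..thi} \<Longrightarrow> \<bar>u' t - u' t'\<bar> \<le> qbar * \<bar>t - t'\<bar>"
proof -
  assume a: "t \<in> {tlo..thi}" "t' \<in> {tlo..thi}"
  have 1: "u' t \<ge> u' t' + (t'-t) * Q' t'" "u' t' \<ge> u' t + (t-t') * Q' t" using ICu' a by auto
  have q: "0 \<le> Q' t" "Q' t \<le> qbar" "0 \<le> Q' t'" "Q' t' \<le> qbar" using Qrange' a by auto
  show ?thesis
  proof (cases "t \<le> t'")
    case True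
    have "(t'-t) * Q' t \<le> (t'-t)*qbar" "(t'-t) * Q' t' \<ge> 0" using True q by (auto intro: mult_left_mono)
    thus ?thesis using 1 True by (auto simp: abs_if algebra_simps)
  next
    case False
    have "(t-t') * Q' t' \<le> (t-t')*qbar" "(t-t') * Q' t \<ge> 0" using False q by (auto intro: mult_left_mono)
    thus ?thesis using 1 False by (auto simp: abs_if algebra_simps)
  qed
qed

lemma Jcont: "continuous_on {tlo..thi} J"
proof -
  have qb: "qbar \<ge> 0" using Qrange[of tlo] th by auto
  have "(2*qbar)-lipschitz_on {tlo..thi} J"
    unfolding lipschitz_on_def dist_real_def
  proof (intro conjI ballI)
    show "0 \<le> 2*qbar" using qb by simp
    fix x y assume "x \<in> {tlo..thi}" "y \<in> {tlo..thi}"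
    hence "\<bar>u x - u y\<bar> \<le> qbar * \<bar>x - y\<bar>" "\<bar>u' x - u' y\<bar> \<le> qbar * \<bar>x - y\<bar>" using uLip uLip' by auto
    thus "\<bar>J x - J y\<bar> \<le> 2*qbar * \<bar>x - y\<bar>" by (simp add: abs_le_iff)
  qed
  thus ?thesis by (rule lipschitz_on_continuous_on)
qed

lemmas Pmono' = Pmono[OF Pcont Pdec]
lemmas V_concave' = V_concave[OF Pcont Pdec]
lemmas f_mono' = f_mono[OF Pcont Pdec]

lemma inA: "t \<in> {tlo..thi} \<Longrightarrow> t \<notin> T0 \<Longrightarrow> t \<in> A"
  using part by blast

lemma A_Theta: "t \<in> A \<Longrightarrow> t \<in> {tlo..thi}" using part by blast
lemma T0_Theta: "t \<in> T0 \<Longrightarrow> t \<in> {tlo..thi}" using part by blast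

lemma T0facts: assumes t: "t \<in> T0" shows "Q t = 0 \<and> u t = 0 \<and> J t \<ge> 0"
proof -
  have tt: "t \<in> {tlo..thi}" using T0_Theta t by blast
  have th': "thi \<in> {tlo..thi}" using th by auto
  have Q0: "Q t = 0" using T0 t by simp
  have "u t \<ge> u thi + (thi - t) * Q thi" using ICu tt th' by blast
  moreover have "(thi - t) * Q thi \<ge> 0" using Qrange th' tt by auto
  moreover have "u thi \<ge> u t + (t - thi) * Q t" using ICu tt th' by blast
  ultimately have u0: "u t = 0" using uthi Q0 by simp
  have "u' t \<ge> u' thi + (thi - t) * Q' thi" using ICu' tt th' by blast
  moreover have "(thi - t) * Q' thi \<ge> 0" using Qrange' th' tt by auto
  moreover have "u' thi \<ge> 0" using IR' th' unfolding IR_def by blast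
  ultimately show ?thesis using Q0 u0 by simp
qed

lemma qmax: assumes t: "t \<in> A" shows "q t = max (Q t) qh"
proof (cases "t \<in> T1")
  case True thus ?thesis using T1 by auto
next
  case False
  hence "t \<in> T01" using t by blast
  hence "q t = qh" "0 < r t" "r t < 1" using T01 by auto
  moreover have "qh * r t \<le> qh" using qh \<open>r t < 1\<close> by (simp add: mult_le_cancel_left1)
  ultimately show ?thesis by simp
qed

lemma qpos: "t \<in> A \<Longrightarrow> q t > 0"
  using T1 T01 qh by force

lemma key:
  assumes t: "t \<in> A"
  shows "RS P c \<alpha> t r' q' u' - RS P c \<alpha> t r q u \<le> (P (q t) - t) * (Q' t - Q t) - (1-\<alpha>) * J t"
proof -
  have tt: "t \<in> {tlo..thi}" using A_Theta t by blast
  have m1: "0 \<le> r' t" "r' t \<le> 1" "0 \<le> q' t" "q' t \<le> qbar" "q' t = 0 \<longleftrightarrow> r' t = 0"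
    using mech' tt unfolding is_mechanism_def by auto
  have m0: "0 \<le> r t" "r t \<le> 1" "0 \<le> q t" "q t \<le> qbar"
    using mech tt unfolding is_mechanism_def by auto
  have qt0: "q t \<noteq> 0" using qpos[OF t] by simp
  have e1: "r' t * TS P c t (q' t) = r' t * (V P (q' t) - c) - t * Q' t"
  proof (cases "q' t = 0")
    case True thus ?thesis using m1 by (simp add: TS_def)
  next
    case False thus ?thesis by (simp add: TS_def right_diff_distrib mult.commute mult.left_commute)
  qed
  have e0: "r t * TS P c t (q t) = r t * (V P (q t) - c) - t * Q t"
    using qt0 by (simp add: TS_def right_diff_distrib mult.commute mult.left_commute)
  define m where "m = V P (q t) - c - P (q t) * q t"
  have "V P (q' t) - V P (q t) \<le> P (q t) * (q' t - q t)" using V_concave'[of "q' t" "q t"] m0 m1 by simp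
  hence a: "V P (q' t) - c - P (q t) * q' t \<le> m" unfolding m_def by (simp add: algebra_simps)
  have b: "r' t * (V P (q' t) - c - P (q t) * q' t) \<le> r' t * m" using mult_left_mono[OF a m1(1)] .
  have cc: "r' t * m \<le> r t * m"
  proof (cases "t \<in> T1")
    case True
    hence "q t \<ge> qh" "r t = 1" using T1 by auto
    have f1: "qh*(P qh - P (q t)) \<le> (V P (q t) - q t * P (q t)) - (V P qh - qh * P qh)"
      using f_mono'[of qh "q t"] qh \<open>q t \<ge> qh\<close> m0 by simp
    have f2: "qh * P (q t) \<le> qh * P qh" using Pmono'[of qh "q t"] qh \<open>q t \<ge> qh\<close> m0
      by (intro mult_left_mono) auto
    have f3: "qh*(P qh - P (q t)) = qh * P qh - qh * P (q t)" by (simp add: algebra_simps)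
    have "m \<ge> 0" unfolding m_def using f1 f2 f3 qh(3) by (simp add: mult.commute)
    thus ?thesis using \<open>r t = 1\<close> m1 by (simp add: mult_left_le_one_le)
  next
    case False
    hence "t \<in> T01" using t by blast
    hence "q t = qh" using T01 by auto
    hence "m = 0" using qh unfolding m_def by (simp add: algebra_simps)
    thus ?thesis by simp
  qed
  have i1: "r' t * (V P (q' t) - c - P (q t) * q' t) = r' t * (V P (q' t) - c) - P (q t) * Q' t"
    by (simp add: algebra_simps)
  have i2: "r t * m = r t * (V P (q t) - c) - P (q t) * Q t" by (simp add: m_def algebra_simps)
  have i3: "P (q t) * (Q' t - Q t) = P (q t) * Q' t - P (q t) * Q t" by (simp add: algebra_simps)
  have comb: "r' t * (V P (q' t) - c) - r t * (V P (q t) - c) \<le> P (q t) * (Q' t - Q t)"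
    using b cc i1 i2 i3 by linarith
  have i4: "(P (q t) - t) * (Q' t - Q t) = P (q t) * (Q' t - Q t) - t * Q' t + t * Q t"
    by (simp add: algebra_simps)
  have i5: "(1-\<alpha>) * J t = (1-\<alpha>) * u' t - (1-\<alpha>) * u t" by (simp add: algebra_simps)
  have "RS P c \<alpha> t r' q' u' - RS P c \<alpha> t r q u =
        (r' t * (V P (q' t) - c) - t * Q' t) - (1-\<alpha>) * u' t - ((r t * (V P (q t) - c) - t * Q t) - (1-\<alpha>) * u t)"
    unfolding RS_def e1 e0 by simp
  thus ?thesis using comb i4 i5 by linarith
qed

lemma tlo_A: "tlo \<in> A"
proof -
  have "tlo \<in> {tlo..thi}" using th by auto
  moreover have "tlo \<notin> T0" using T0 qtlo by blast
  ultimately show ?thesis using inA by blast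
qed

lemma cons: assumes t: "t \<in> A" shows "(1-\<alpha>) * J t \<le> (P (q t) - t) * (Q' t - Q t)"
  using key[OF t] dom[OF A_Theta[OF t]] by linarith

lemma ICJ: "t \<in> {tlo..thi} \<Longrightarrow> t' \<in> {tlo..thi} \<Longrightarrow> J t - J t' \<ge> (t'-t)*(Q' t' - Q t)"
proof -
  assume a: "t \<in> {tlo..thi}" "t' \<in> {tlo..thi}"
  have "u' t \<ge> u' t' + (t'-t) * Q' t'" using ICu' a by blast
  moreover have "u t' \<ge> u t + (t-t') * Q t" using ICu a by blast
  moreover have "(t'-t)*(Q' t' - Q t) = (t'-t) * Q' t' + (t-t') * Q t" by (simp add: algebra_simps)
  ultimately show ?thesis by linarith
qed

lemma Delta_nonneg:
  assumes s: "s \<in> {tlo..thi}" "s > tlo" and Js: "J s \<ge> 0"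
  shows "Q' s - Q s \<ge> 0"
proof (cases "s \<in> T0")
  case True
  have "Q s = 0" using T0facts[OF True] by blast
  thus ?thesis using Qrange'[OF s(1)] by linarith
next
  case False
  hence sA: "s \<in> A" using inA s by blast
  have phi: "P (q s) - s > 0" using SDD1[of s] s by auto
  have "(1-\<alpha>) * J s \<ge> 0" using al Js by simp
  hence "(P (q s) - s) * (Q' s - Q s) \<ge> 0" using cons[OF sA] by linarith
  thus ?thesis using phi by (simp add: zero_le_mult_iff)
qed

lemma Delta_bound:
  assumes x: "x \<in> A" "x > tlo" "x < s" and Jx: "J x < 0" and Ps: "P (q x) \<ge> s"
  shows "Q' x - Q x \<ge> J x / (s - x)"
proof (cases "Q' x - Q x \<ge> 0")
  case True
  have "J x / (s - x) < 0" using Jx x by (simp add: divide_neg_pos)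
  thus ?thesis using True by linarith
next
  case False
  hence neg: "Q' x - Q x < 0" by simp
  have "(P (q x) - x) * (Q' x - Q x) \<le> (s - x) * (Q' x - Q x)"
    using Ps neg by (intro mult_right_mono_neg) auto
  moreover have "J x \<le> (1-\<alpha>) * J x"
  proof -
    have "\<alpha> * J x \<le> 0" using Jx al by (intro mult_nonneg_nonpos) auto
    moreover have "(1-\<alpha>) * J x = J x - \<alpha> * J x" by (simp add: algebra_simps)
    ultimately show ?thesis by linarith
  qed
  ultimately have "J x \<le> (s - x) * (Q' x - Q x)" using cons[OF x(1)] by linarith
  thus ?thesis using x by (simp add: pos_divide_le_eq mult.commute)
qed

lemma ev_claim:
  assumes t1: "tlo \<le> \<theta>1" "\<theta>1 < s" "s \<le> thi"
    and neg: "\<And>x. \<theta>1 \<le> x \<Longrightarrow> x < s \<Longrightarrow> J x < 0"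
  shows "\<exists>b<s. \<forall>x. b < x \<longrightarrow> x < s \<longrightarrow> P (q x) \<ge> s"
proof -
  have inAx: "x \<in> A" "x \<in> {tlo..thi}" if "\<theta>1 < x" "x < s" for x
  proof -
    show xT: "x \<in> {tlo..thi}" using that t1 by auto
    have "J x < 0" using neg[of x] that by simp
    hence "x \<notin> T0" using T0facts[of x] by linarith
    thus "x \<in> A" using inA xT by blast
  qed
  have sT: "s \<in> {tlo<..thi}" "s \<in> {tlo..thi}" using t1 by auto
  have Qlim: "(Q \<longlongrightarrow> Q s) (at_left s)" using LC[OF sT(1)] by (simp add: continuous_within)
  have evI: "eventually (\<lambda>x. x \<in> {\<theta>1<..<s}) (at_left s)" by (rule eventually_at_left_real) fact
  have "eventually (\<lambda>x. P (q x) \<ge> s) (at_left s)"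
  proof (cases "s \<in> T0")
    case False
    hence sA: "s \<in> A" using inA sT by blast
    have Ps: "P (q s) > s" using SDD1 sT by blast
    have mem: "max (Q s) qh \<in> {0..qbar}" using Qrange[OF sT(2)] qh by auto
    have evmem: "eventually (\<lambda>x. max (Q x) qh \<in> {0..qbar}) (at_left s)"
      using evI
    proof (rule eventually_mono)
      fix x assume "x \<in> {\<theta>1<..<s}"
      hence "x \<in> {tlo..thi}" using inAx by auto
      thus "max (Q x) qh \<in> {0..qbar}" using Qrange qh by auto
    qed
    have lim: "((\<lambda>x. P (max (Q x) qh)) \<longlongrightarrow> P (max (Q s) qh)) (at_left s)"
      by (rule continuous_on_tendsto_compose[OF Pcont tendsto_max[OF Qlim tendsto_const] mem evmem])
    have "P (max (Q s) qh) = P (q s)" using qmax[OF sA] by simp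
    hence ev2: "eventually (\<lambda>x. s < P (max (Q x) qh)) (at_left s)" using order_tendstoD(1)[OF lim] Ps by simp
    show ?thesis using ev2 evI
    proof (eventually_elim)
      case (elim x)
      hence "x \<in> A" using inAx by auto
      thus ?case using qmax elim by simp
    qed
  next
    case True
    have Qs: "Q s = 0" using T0facts[OF True] by blast
    have ev2: "eventually (\<lambda>x. Q x < qh) (at_left s)" using order_tendstoD(2)[OF Qlim] Qs qh by simp
    have ev3: "eventually (\<lambda>x. q x = qh \<and> x \<in> {\<theta>1<..<s}) (at_left s)" using ev2 evI
    proof (eventually_elim)
      case (elim x)
      hence xA: "x \<in> A" using inAx by auto
      have "x \<notin> T1"
      proof
        assume "x \<in> T1"
        hence "q x \<ge> qh" "r x = 1" using T1 by auto
        hence "Q x = q x" by simp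
        thus False using elim \<open>q x \<ge> qh\<close> by linarith
      qed
      hence "x \<in> T01" using xA by blast
      hence "q x = qh" using T01[of x] by simp
      thus ?case using elim by simp
    qed
    have "\<exists>b<s. \<forall>y>b. y < s \<longrightarrow> q y = qh \<and> y \<in> {\<theta>1<..<s}"
      using ev3 unfolding eventually_at_left[OF t1(2)] .
    then obtain b where b0: "b < s" and b1: "\<forall>y>b. y < s \<longrightarrow> q y = qh \<and> y \<in> {\<theta>1<..<s}"
      by blast
    have b: "b < s" "\<And>y. b < y \<Longrightarrow> y < s \<Longrightarrow> q y = qh \<and> y \<in> {\<theta>1<..<s}"
      using b0 b1 by auto
    have Pqh: "P qh \<ge> s"
    proof (rule ccontr)
      assume "\<not> P qh \<ge> s"
      define x where "x = (max b (P qh) + s) / 2"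
      have x: "b < x" "x < s" "P qh < x" using b(1) \<open>\<not> P qh \<ge> s\<close> unfolding x_def by auto
      have "q x = qh" "x \<in> {\<theta>1<..<s}" using b(2)[OF x(1,2)] by auto
      moreover have "x \<in> {tlo<..thi}" using \<open>x \<in> {\<theta>1<..<s}\<close> t1 by auto
      ultimately have "P qh > x" using SDD1[of x] by simp
      thus False using x by simp
    qed
    show ?thesis unfolding eventually_at_left[OF t1(2)]
    proof (intro exI[of _ b] conjI allI impI)
      fix y assume "b < y" "y < s"
      thus "s \<le> P (q y)" using b(2)[of y] Pqh by simp
    qed (rule b(1))
  qed
  thus ?thesis unfolding eventually_at_left[OF t1(2)] by blast
qed

lemma J_nonneg: assumes t: "t \<in> {tlo..thi}" shows "J t \<ge> 0"
proof (rule ccontr)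
  assume "\<not> J t \<ge> 0"
  hence Jt: "J t < 0" by simp
  define S where "S = {x \<in> {t..thi}. (\<lambda>_. 0::real) x \<le> J x}"
  have thiS: "thi \<in> S"
  proof -
    have "u' thi \<ge> 0" using IR' th unfolding IR_def by auto
    thus ?thesis using t uthi unfolding S_def by auto
  qed
  have clS: "closed S" unfolding S_def
    by (rule continuous_on_closed_Collect_le[OF continuous_on_const continuous_on_subset[OF Jcont]])
       (use t in auto)
  have bdd: "bdd_below S" unfolding S_def bdd_below_def by auto
  define s where "s = Inf S"
  have sS: "s \<in> S" unfolding s_def using closed_contains_Inf[OF _ bdd clS] thiS by auto
  have Js: "J s \<ge> 0" "t \<le> s" "s \<le> thi" using sS unfolding S_def by auto
  have ts: "t < s" using Js Jt by (cases "t = s") auto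
  have neg: "J x < 0" if "t \<le> x" "x < s" for x
  proof (rule ccontr)
    assume "\<not> J x < 0"
    hence "x \<in> S" using that Js unfolding S_def by auto
    hence "s \<le> x" unfolding s_def using bdd by (rule cInf_lower)
    thus False using that by simp
  qed
  have tl: "tlo \<le> t" using t by simp
  obtain b where b: "b < s" "\<And>x. b < x \<Longrightarrow> x < s \<Longrightarrow> P (q x) \<ge> s"
    using ev_claim[OF tl ts Js(3) neg] by blast
  define t0 where "t0 = (max b t + s) / 2"
  have t0: "t < t0" "b < t0" "t0 < s" using b(1) ts unfolding t0_def by auto
  have sT: "s \<in> {tlo..thi}" "s > tlo" using Js t ts by auto
  have Ds: "Q' s - Q s \<ge> 0" using Delta_nonneg[OF sT Js(1)] .
  have props: "x \<in> A \<and> x > tlo \<and> x \<in> {tlo..thi} \<and> J x < 0 \<and> P (q x) \<ge> s" if "t0 \<le> x" "x < s" for x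
  proof -
    have xT: "x \<in> {tlo..thi}" using that t0 t Js by auto
    have Jx: "J x < 0" using neg that t0 by auto
    hence "x \<notin> T0" using T0facts[of x] by linarith
    hence "x \<in> A" using inA xT by blast
    thus ?thesis using xT Jx b(2)[of x] that t0 t by auto
  qed
  have Db: "Q' x - Q x \<ge> J x / (s - x)" if "t0 \<le> x" "x < s" for x
    using props[OF that] Delta_bound[of x s] that by auto
  define k where "k x = J x / (s - x)" for x
  have mono: "k y \<le> k t0" if y: "t0 < y" "y < s" for y
  proof (rule tele[where f = k and g = Q and C = "1/(s-y)" and x = t0 and y = y])
    show "t0 \<le> y" using y by simp
    show "0 \<le> 1/(s-y)" using y by simp
    fix a a' assume aa: "t0 \<le> a" "a < a'" "a' \<le> y"
    have pa: "a \<in> {tlo..thi}" "a' \<in> {tlo..thi}" using props[of a] props[of a'] aa y by auto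
    have h1: "J a - J a' \<ge> (a'-a)*(Q' a' - Q a)" using ICJ pa by blast
    have h2: "Q' a' - Q a' \<ge> J a' / (s - a')" using Db aa y by auto
    have h3: "(a'-a)*(Q' a' - Q a') \<ge> (a'-a)*(J a' / (s - a'))"
      using h2 aa by (intro mult_left_mono) auto
    have h4: "(a'-a)*(Q' a' - Q a) = (a'-a)*(Q' a' - Q a') - (a'-a)*(Q a - Q a')" by (simp add: algebra_simps)
    have sa': "s - a' > 0" using aa y by simp
    have sa: "s - a > 0" using aa y by simp
    have h5: "J a' + (a'-a)*(J a' / (s - a')) = J a' * (s - a) / (s - a')"
      using sa' by (simp add: field_simps)
    have h6: "J a \<ge> J a' * (s - a) / (s - a') - (a'-a)*(Q a - Q a')" using h1 h3 h4 h5 by linarith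
    hence h7: "J a / (s - a) \<ge> J a' / (s - a') - (a'-a)*(Q a - Q a') / (s - a)"
      using divstep sa sa' by blast
    have Qm: "Q a' \<le> Q a" using Qmono pa aa by auto
    have nn: "0 \<le> (a'-a)*(Q a - Q a')" using Qm aa by simp
    have h8: "(a'-a)*(Q a - Q a') / (s - a) \<le> (a'-a)*(Q a - Q a') / (s - y)"
      using nn aa y by (intro divide_left_mono) auto
    have "(a'-a)*(Q a - Q a') / (s - y) = 1/(s-y) * (a'-a) * (Q a - Q a')" by simp
    thus "k a' \<le> k a + 1/(s-y) * (a'-a) * (Q a - Q a')" unfolding k_def using h7 h8 by linarith
  qed
  have lowk: "k y \<ge> Q s - Q y" if y: "t0 < y" "y < s" for y
  proof -
    have py: "y \<in> {tlo..thi}" using props[of y] y by auto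
    have "J y - J s \<ge> (s - y)*(Q' s - Q y)" using ICJ py sT by blast
    moreover have "(s - y)*(Q' s - Q y) \<ge> (s - y)*(Q s - Q y)" using Ds y by (intro mult_left_mono) auto
    ultimately have "J y \<ge> (s - y)*(Q s - Q y)" using Js by linarith
    thus ?thesis unfolding k_def using y by (simp add: pos_le_divide_eq mult.commute)
  qed
  have kt0: "k t0 < 0" unfolding k_def using props[of t0] t0 by (simp add: divide_neg_pos)
  have Qlim: "(Q \<longlongrightarrow> Q s) (at_left s)" using LC[of s] sT by (simp add: continuous_within)
  have lim: "((\<lambda>y. Q s - Q y) \<longlongrightarrow> 0) (at_left s)"
    using tendsto_diff[OF tendsto_const[of "Q s"] Qlim] by simp
  have ev: "eventually (\<lambda>y. Q s - Q y \<le> k t0) (at_left s)"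
    using eventually_at_left_real[OF t0(3)]
  proof (rule eventually_mono)
    fix y assume "y \<in> {t0<..<s}"
    thus "Q s - Q y \<le> k t0" using mono[of y] lowk[of y] by auto
  qed
  have "0 \<le> k t0" by (rule tendsto_upperbound[OF lim ev trivial_limit_at_left_real])
  thus False using kt0 by simp
qed

lemma J_tlo: "J tlo \<le> 0"
proof -
  have "(1-\<alpha>) * J tlo \<le> 0" using cons[OF tlo_A] SDD2 by simp
  thus ?thesis using al by (simp add: mult_le_0_iff)
qed

lemma J_zero: assumes t: "t \<in> {tlo..thi}" shows "J t = 0"
proof -
  have "J t \<le> J tlo"
  proof (rule tele[where f = J and g = Q and C = 1 and x = tlo and y = t])
    show "tlo \<le> t" using t by simp
    show "(0::real) \<le> 1" by simp
    fix a a' assume aa: "tlo \<le> a" "a < a'" "a' \<le> t"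
    have pa: "a \<in> {tlo..thi}" "a' \<in> {tlo..thi}" using aa t by auto
    have h1: "J a - J a' \<ge> (a'-a)*(Q' a' - Q a)" using ICJ pa by blast
    have "Q' a' - Q a' \<ge> 0" using Delta_nonneg[OF pa(2)] J_nonneg[OF pa(2)] aa by auto
    hence "(a'-a)*(Q' a' - Q a') \<ge> 0" using aa by simp
    moreover have "(a'-a)*(Q' a' - Q a) = (a'-a)*(Q' a' - Q a') - (a'-a)*(Q a - Q a')" by (simp add: algebra_simps)
    ultimately show "J a' \<le> J a + 1 * (a'-a) * (Q a - Q a')" using h1 by linarith
  qed
  thus ?thesis using J_tlo J_nonneg[OF t] by linarith
qed

lemma Qle: assumes t: "t \<in> {tlo..thi}" "t > tlo" shows "Q' t \<le> Q t"
proof -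
  have tT: "t \<in> {tlo<..thi}" using t by auto
  have Qlim: "(Q \<longlongrightarrow> Q t) (at_left t)" using LC[OF tT] by (simp add: continuous_within)
  have ev: "eventually (\<lambda>x. Q' t \<le> Q x) (at_left t)"
    using eventually_at_left_real[OF t(2)]
  proof (rule eventually_mono)
    fix x assume x: "x \<in> {tlo<..<t}"
    hence px: "x \<in> {tlo..thi}" using t by auto
    have "J x - J t \<ge> (t - x)*(Q' t - Q x)" using ICJ px t by blast
    hence "(t - x)*(Q' t - Q x) \<le> 0" using J_zero[OF px] J_zero[OF t(1)] by simp
    thus "Q' t \<le> Q x" using x by (simp add: mult_le_0_iff)
  qed
  show ?thesis by (rule tendsto_lowerbound[OF Qlim ev trivial_limit_at_left_real])
qed

lemma main: assumes t: "t \<in> {tlo..thi}" shows "RS P c \<alpha> t r' q' u' \<le> RS P c \<alpha> t r q u"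
proof (cases "t \<in> T0")
  case False
  hence tA: "t \<in> A" using inA t by blast
  have k: "RS P c \<alpha> t r' q' u' - RS P c \<alpha> t r q u \<le> (P (q t) - t) * (Q' t - Q t)"
    using key[OF tA] J_zero[OF t] by simp
  show ?thesis
  proof (cases "t = tlo")
    case True thus ?thesis using k SDD2 by simp
  next
    case False
    hence "t > tlo" using t by simp
    hence "Q' t - Q t \<ge> 0" "Q' t \<le> Q t" using Delta_nonneg[OF t] J_nonneg[OF t] Qle[OF t] by auto
    hence "Q' t - Q t = 0" by simp
    thus ?thesis using k by simp
  qed
next
  case True
  have f: "Q t = 0" "u t = 0" using T0facts[OF True] by auto
  have "t \<noteq> tlo" using True T0 qtlo by blast
  hence "t > tlo" using t by simp
  hence "Q' t \<le> 0" using Qle[OF t] f by simp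
  hence "Q' t = 0" using Qrange'[OF t] by simp
  have m1: "q' t = 0 \<longleftrightarrow> r' t = 0" using mech' t unfolding is_mechanism_def by auto
  have r'0: "r' t = 0" using \<open>Q' t = 0\<close> m1 by auto
  have u'0: "u' t = 0" using J_zero[OF t] f by simp
  have r0: "r t = 0" using T0[OF True] by simp
  show ?thesis unfolding RS_def using r'0 u'0 r0 f by simp
qed

end


theorem theorem3:
  fixes P :: "real \<Rightarrow> real" and c qbar \<alpha> tlo thi :: real
    and r q u :: "real \<Rightarrow> real"
  assumes theta: "0 < tlo" "tlo < thi"
    and cpos: "c > 0"
    and qbar: "qbar > 0"
    and Pcont: "continuous_on {0..qbar} P"
    and Pdec: "\<And>x y. 0 \<le> x \<Longrightarrow> x < y \<Longrightarrow> y \<le> qbar \<Longrightarrow> P y < P x"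
    and Pnonneg: "\<And>x. 0 \<le> x \<Longrightarrow> x \<le> qbar \<Longrightarrow> P x \<ge> 0"
    and Pzero: "P qbar = 0"
    and A2: "\<exists>qe\<in>{0..qbar}. P qe = thi \<and> TS P c thi qe > 0"
    and alpha: "0 \<le> \<alpha>" "\<alpha> < 1"
    and FR: "floor_randomized P c qbar tlo thi r q u"
    and LC: "left_continuous tlo thi r q"
    and SDD: "strict_DD P qbar tlo thi q"
  shows "undominated P c qbar \<alpha> tlo thi r q u"
proof -
  have adm: "admissible tlo thi qbar r q u" and uthi: "u thi = 0" using FR unfolding floor_randomized_def by auto
  obtain T1 T01 T0 :: "real set" where
    part: "T1 \<union> T01 \<union> T0 = {tlo..thi}"
    and T1: "\<forall>\<theta>\<in>T1. q \<theta> \<ge> qfloor P c qbar \<and> r \<theta> = 1"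
    and T01: "\<forall>\<theta>\<in>T01. q \<theta> = qfloor P c qbar \<and> 0 < r \<theta> \<and> r \<theta> < 1"
    and T0: "\<forall>\<theta>\<in>T0. q \<theta> = 0 \<and> r \<theta> = 0"
    using FR unfolding floor_randomized_def by blast
  obtain qe where qe: "qe \<in> {0..qbar}" "P qe = thi" "TS P c thi qe > 0" using A2 by blast
  have qf: "0 < qfloor P c qbar" "qfloor P c qbar \<le> qbar"
    "V P (qfloor P c qbar) - qfloor P c qbar * P (qfloor P c qbar) = c"
    using qfloor_props[OF Pcont Pdec cpos qe] by auto
  have P0: "thi \<le> P 0" using Pmono[OF Pcont Pdec, of 0 qe] qe by auto
  have mech: "is_mechanism tlo thi qbar r q u" and IC: "IC tlo thi r q u"
    using adm unfolding admissible_def by auto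
  have qeff: "qeff P qbar t \<in> {0..qbar} \<and> P (qeff P qbar t) = t" if "t \<in> {tlo..thi}" for t
    using qeff_props[OF Pcont Pdec, of t] that theta P0 Pzero qbar by auto
  have SDD1: "P (q t) > t" if t: "t \<in> {tlo<..thi}" for t
  proof -
    have tt: "t \<in> {tlo..thi}" using t by auto
    have "q t < qeff P qbar t" using SDD t unfolding strict_DD_def by blast
    moreover have "0 \<le> q t" using mech tt unfolding is_mechanism_def by auto
    ultimately have "P (qeff P qbar t) < P (q t)" using Pdec[of "q t" "qeff P qbar t"] qeff[OF tt] by auto
    thus ?thesis using qeff[OF tt] by simp
  qed
  have tloT: "tlo \<in> {tlo..thi}" using theta by auto
  have SDD2: "P (q tlo) = tlo" using SDD qeff[OF tloT] unfolding strict_DD_def by simp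
  have qtlo: "q tlo \<noteq> 0"
  proof
    assume "q tlo = 0"
    hence "P 0 = tlo" using SDD2 by simp
    thus False using P0 theta by simp
  qed
  have LC': "\<And>t. t \<in> {tlo<..thi} \<Longrightarrow> continuous (at_left t) (\<lambda>t. q t * r t)"
    using LC unfolding left_continuous_def by blast
  show ?thesis unfolding undominated_def
  proof (intro conjI notI)
    show "admissible tlo thi qbar r q u" by (rule adm)
    assume "\<exists>r' q' u'. dominates P c qbar \<alpha> tlo thi r' q' u' r q u"
    then obtain r' q' u' where d: "dominates P c qbar \<alpha> tlo thi r' q' u' r q u" by blast
    have adm': "admissible tlo thi qbar r' q' u'"
      and ge: "\<And>t. t \<in> {tlo..thi} \<Longrightarrow> RS P c \<alpha> t r' q' u' \<ge> RS P c \<alpha> t r q u"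
      and gt: "\<exists>t\<in>{tlo..thi}. RS P c \<alpha> t r' q' u' > RS P c \<alpha> t r q u"
      using d unfolding dominates_def by auto
    have mech': "is_mechanism tlo thi qbar r' q' u'" and IC': "IC tlo thi r' q' u'"
      and IR': "IR tlo thi u'" using adm' unfolding admissible_def by auto
    have le: "RS P c \<alpha> t r' q' u' \<le> RS P c \<alpha> t r q u" if t: "t \<in> {tlo..thi}" for t
      by (rule main[OF theta(2) alpha Pcont Pdec qf mech mech' IC IC' uthi IR' part _ _ _
            SDD1 SDD2 qtlo LC' ge t]) (use T1 T01 T0 in blast)+
    show False using gt le by force
  qed
qed


end
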